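(* In the setting below, assume $\int_{\bar B_R}|\eta|\,d\mu<\infty$, $\mu(\{x\})=0$ and $\int_{\bar B_r}|\eta-\eta(x)|\,d\mu>0$ for all $r>0$. Then $x$ is a Lebesgue point for $\eta$ with respect to $\mu$ if and only if there exist $\alpha\in(0,1)$ and an $\alpha$-sequence $(r_m)_{m\ge m_1}$ at $x$ such that $x$ is a Lebesgue point along $(r_m)_{m\ge m_1}$.
   Context: Let $(\mathcal{X},d)$ be a metric space with Borel $\sigma$-algebra, $\eta:\mathcal{X}\to\mathbb{R}$ measurable, and $\mu$ a Borel measure on $\mathcal{X}$. Fix $x\in\mathcal{X}$ with $\mu(\bar B_r)>0$ for all $r>0$, where $\bar B_r=\{x':d(x,x')\le r\}$, and fix $R>0$ with $\mu(\bar B_R)<\infty$. The point $x$ is a Lebesgue point for $\eta$ with respect to $\mu$ if $\frac{1}{\mu(\bar B_r)}\int_{\bar B_r}|\eta-\eta(x)|\,d\mu\to0$ as $r\to0^+$; for a sequence of strictly positive numbers $\rho_m\to0$, $x$ is a Lebesgue point along $(\rho_m)$ if $\frac{1}{\mu(\bar B_{\rho_m})}\int_{\bar B_{\rho_m}}|\eta-\eta(x)|\,d\mu\to0$ as $m\to\infty$. For $\alpha\in(0,1)$ and $r>0$ let $M(r)=\big(\int_{\bar B_r}|\eta-\eta(x)|\,d\mu\big)^{\alpha}\big(\mu(\bar B_r)\big)^{1-\alpha}$; choose $R_1\in(0,R)$ with $M(R_1)<M(R)$, let $m_1=\lceil 1/M(R_1)\rceil$, and for integers $m\ge m_1$ let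 $r_m=\sup\{r>0:M(r)<1/m\}$. Any sequence $(r_m)_{m\ge m_1}$ so obtained is called an $\alpha$-sequence at $x$. *)

theory Defs
  imports "HOL-Analysis.Analysis"
begin

definition dev_int :: "'a::metric_space measure \<Rightarrow> ('a \<Rightarrow> real) \<Rightarrow> 'a \<Rightarrow> real \<Rightarrow> ennreal" where
  "dev_int \<mu> \<eta> x r = (\<integral>\<^sup>+ y \<in> cball x r. ennreal \<bar>\<eta> y - \<eta> x\<bar> \<partial>\<mu>)"

text \<open>Mean of |eta - eta(x)| over the closed ball (used only where everything is finite).\<close>
definition ball_avg :: "'a::metric_space measure \<Rightarrow> ('a \<Rightarrow> real) \<Rightarrow> 'a \<Rightarrow> real \<Rightarrow> real" where
  "ball_avg \<mu> \<eta> x r = enn2real (dev_int \<mu> \<eta> x r) / measure \<mu> (cball x r)"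

definition lebesgue_point :: "'a::metric_space measure \<Rightarrow> ('a \<Rightarrow> real) \<Rightarrow> 'a \<Rightarrow> bool" where
  "lebesgue_point \<mu> \<eta> x \<longleftrightarrow> ((\<lambda>r. ball_avg \<mu> \<eta> x r) \<longlongrightarrow> 0) (at_right 0)"

definition lebesgue_point_along :: "'a::metric_space measure \<Rightarrow> ('a \<Rightarrow> real) \<Rightarrow> 'a \<Rightarrow> (nat \<Rightarrow> real) \<Rightarrow> nat \<Rightarrow> bool" where
  "lebesgue_point_along \<mu> \<eta> x \<rho> m0 \<longleftrightarrow>
     (\<forall>m\<ge>m0. \<rho> m > 0) \<and> \<rho> \<longlonglongrightarrow> 0 \<and> (\<lambda>m. ball_avg \<mu> \<eta> x (\<rho> m)) \<longlonglongrightarrow> 0"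

definition alphaM :: "'a::metric_space measure \<Rightarrow> ('a \<Rightarrow> real) \<Rightarrow> 'a \<Rightarrow> real \<Rightarrow> real \<Rightarrow> ennreal" where
  "alphaM \<mu> \<eta> x \<alpha> r =
     (if dev_int \<mu> \<eta> x r = \<infinity> \<or> emeasure \<mu> (cball x r) = \<infinity> then \<infinity>
      else ennreal (enn2real (dev_int \<mu> \<eta> x r) powr \<alpha> * measure \<mu> (cball x r) powr (1 - \<alpha>)))"

definition alpha_sequence :: "'a::metric_space measure \<Rightarrow> ('a \<Rightarrow> real) \<Rightarrow> 'a \<Rightarrow> real \<Rightarrow> real \<Rightarrow> (nat \<Rightarrow> real) \<Rightarrow> nat \<Rightarrow> bool" where
  "alpha_sequence \<mu> \<eta> x R \<alpha> r m1 \<longleftrightarrow>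
     (\<exists>R1. 0 < R1 \<and> R1 < R \<and> alphaM \<mu> \<eta> x \<alpha> R1 < alphaM \<mu> \<eta> x \<alpha> R \<and>
        m1 = nat \<lceil>1 / enn2real (alphaM \<mu> \<eta> x \<alpha> R1)\<rceil> \<and>
        (\<forall>m\<ge>m1. r m = Sup {s. 0 < s \<and> alphaM \<mu> \<eta> x \<alpha> s < ennreal (1 / real m)}))"

end

theory Submission
  imports Defs
begin


lemma cball_Inter:
  fixes x :: "'a::metric_space"
  assumes "0 \<le> c" "0 < d"
  shows "(\<Inter>k. cball x (c + d / real (Suc k))) = cball x c"
proof
  show "cball x c \<subseteq> (\<Inter>k. cball x (c + d / real (Suc k)))"
    using assms by (intro INT_greatest subset_cball) auto
  show "(\<Inter>k. cball x (c + d / real (Suc k))) \<subseteq> cball x c"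
  proof
    fix y assume y: "y \<in> (\<Inter>k. cball x (c + d / real (Suc k)))"
    show "y \<in> cball x c"
    proof (rule ccontr)
      assume "y \<notin> cball x c"
      then have e: "0 < (dist x y - c) / d" using assms by auto
      obtain k where k: "inverse (real (Suc k)) < (dist x y - c) / d"
        using reals_Archimedean[OF e] by blast
      then have "d * inverse (real (Suc k)) < d * ((dist x y - c) / d)"
        using assms by (intro mult_strict_left_mono) auto
      moreover have "d / real (Suc k) = d * inverse (real (Suc k))" by (simp add: divide_inverse)
      moreover have "d * ((dist x y - c) / d) = dist x y - c" using assms by simp
      ultimately have "d / real (Suc k) < dist x y - c" by linarith
      moreover have "dist x y \<le> c + d / real (Suc k)" using y by auto
      ultimately show False by linarith
    qed
  qed
qed

lemma ball_rcont:
  fixes N :: "'a::metric_space measure"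
  assumes sN: "sets N = sets borel" and fin: "emeasure N (cball x R) < \<infinity>"
    and c: "0 \<le> c" "c < R"
  shows "(\<lambda>k. measure N (cball x (c + (R - c) / real (Suc k)))) \<longlonglongrightarrow> measure N (cball x c)"
proof -
  define A where "A k = cball x (c + (R - c) / real (Suc k))" for k
  have sub: "A k \<subseteq> cball x R" for k
  proof -
    have "(R - c) / real (Suc k) \<le> R - c" using c by (simp add: divide_le_eq)
    then show ?thesis unfolding A_def by (intro subset_cball) linarith
  qed
  have "range A \<subseteq> sets N" unfolding A_def sN by auto
  moreover have "decseq A" unfolding A_def decseq_def
  proof (intro allI impI subset_cball)
    fix m n :: nat assume "m \<le> n"
    then show "c + (R - c) / real (Suc n) \<le> c + (R - c) / real (Suc m)"
      using c by (auto intro!: divide_left_mono)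
  qed
  moreover have "emeasure N (A i) \<noteq> \<infinity>" for i
  proof -
    have "emeasure N (A i) \<le> emeasure N (cball x R)"
      using sub[of i] by (intro emeasure_mono) (auto simp: sN)
    then show ?thesis using fin by (auto simp: top_unique)
  qed
  ultimately have "(\<lambda>n. measure N (A n)) \<longlonglongrightarrow> measure N (\<Inter>i. A i)"
    by (rule Lim_measure_decseq)
  moreover have "(\<Inter>i. A i) = cball x c" unfolding A_def using c by (intro cball_Inter) auto
  ultimately show ?thesis unfolding A_def by simp
qed

lemma powr_split:
  fixes D V \<alpha> :: real assumes "0 < D" "0 < V"
  shows "D powr \<alpha> * V powr (1 - \<alpha>) = (D / V) powr \<alpha> * V"
proof -
  have "D = (D / V) * V" using assms by simp
  then have "D powr \<alpha> = (D / V) powr \<alpha> * V powr \<alpha>"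
    using assms by (metis powr_mult less_eq_real_def divide_nonneg_nonneg)
  then have "D powr \<alpha> * V powr (1 - \<alpha>) = (D / V) powr \<alpha> * (V powr \<alpha> * V powr (1 - \<alpha>))"
    by simp
  also have "V powr \<alpha> * V powr (1 - \<alpha>) = V" using assms by (simp add: powr_add[symmetric])
  finally show ?thesis .
qed

lemma key:
  fixes D1 V1 D2 V2 \<alpha> :: real
  assumes a: "0 < \<alpha>" and p: "0 < D1" "0 < V1" "0 < D2" "0 < V2" and V: "V2 \<le> V1"
    and M: "D1 powr \<alpha> * V1 powr (1 - \<alpha>) \<le> 2 * (D2 powr \<alpha> * V2 powr (1 - \<alpha>))"
  shows "D1 / V1 \<le> 2 powr (1 / \<alpha>) * (D2 / V2)"
proof -
  define A where "A = D1 / V1"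
  define B where "B = D2 / V2"
  have A: "0 < A" and B: "0 < B" unfolding A_def B_def using p by auto
  have "A powr \<alpha> * V1 \<le> 2 * (B powr \<alpha> * V2)"
    using M unfolding A_def B_def powr_split[OF p(1,2)] powr_split[OF p(3,4)] .
  also have "\<dots> \<le> 2 * (B powr \<alpha> * V1)" using V by (simp add: mult_left_mono)
  finally have "A powr \<alpha> * V1 \<le> (2 * B powr \<alpha>) * V1" by simp
  then have le: "A powr \<alpha> \<le> 2 * B powr \<alpha>" using p(2) by simp
  have "A = (A powr \<alpha>) powr (1 / \<alpha>)" using A a by (simp add: powr_powr)
  also have "\<dots> \<le> (2 * B powr \<alpha>) powr (1 / \<alpha>)" using le a by (intro powr_mono2) auto
  also have "\<dots> = 2 powr (1 / \<alpha>) * B" using a B by (simp add: powr_mult powr_powr)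
  finally show ?thesis unfolding A_def B_def .
qed

definition "Vf \<mu> x r = measure \<mu> (cball x r)"
definition "Df \<mu> \<eta> x r = enn2real (dev_int \<mu> \<eta> x r)"
definition "Mf \<mu> \<eta> x \<alpha> r = Df \<mu> \<eta> x r powr \<alpha> * Vf \<mu> x r powr (1 - \<alpha>)"
definition "Sset \<mu> \<eta> x \<alpha> m = {s. 0 < s \<and> alphaM \<mu> \<eta> x \<alpha> s < ennreal (1 / real m)}"

context
  fixes \<mu> :: "'a::metric_space measure" and \<eta> :: "'a \<Rightarrow> real" and x :: 'a and R :: real
  assumes sets: "sets \<mu> = sets borel"
    and meas: "\<eta> \<in> borel_measurable \<mu>"
    and pos: "\<forall>r>0. emeasure \<mu> (cball x r) > 0"
    and R: "R > 0"
    and finR: "emeasure \<mu> (cball x R) < \<infinity>"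
    and intR: "(\<integral>\<^sup>+ y \<in> cball x R. ennreal \<bar>\<eta> y\<bar> \<partial>\<mu>) < \<infinity>"
    and sing: "emeasure \<mu> {x} = 0"
    and dpos: "\<forall>r>0. dev_int \<mu> \<eta> x r > 0"
begin

lemma cb_sets[measurable]: "cball x r \<in> sets \<mu>"
  using sets by simp

lemma meas'[measurable]: "\<eta> \<in> borel_measurable \<mu>" by (rule meas)

lemma f_meas[measurable]: "(\<lambda>y. ennreal \<bar>\<eta> y - \<eta> x\<bar>) \<in> borel_measurable \<mu>"
  by measurable

lemma dens_sets: "sets (density \<mu> (\<lambda>y. ennreal \<bar>\<eta> y - \<eta> x\<bar>)) = sets borel"
  using sets by simp

lemma dev_dens: "dev_int \<mu> \<eta> x r = emeasure (density \<mu> (\<lambda>y. ennreal \<bar>\<eta> y - \<eta> x\<bar>)) (cball x r)"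
  unfolding dev_int_def by (subst emeasure_density) auto

lemma devR: "dev_int \<mu> \<eta> x R < \<infinity>"
proof -
  have "dev_int \<mu> \<eta> x R \<le> (\<integral>\<^sup>+ y. ennreal \<bar>\<eta> y\<bar> * indicator (cball x R) y
      + ennreal \<bar>\<eta> x\<bar> * indicator (cball x R) y \<partial>\<mu>)"
    unfolding dev_int_def
  proof (intro nn_integral_mono)
    fix y
    have "ennreal \<bar>\<eta> y - \<eta> x\<bar> \<le> ennreal (\<bar>\<eta> y\<bar> + \<bar>\<eta> x\<bar>)"
      by (intro ennreal_leI) linarith
    also have "\<dots> = ennreal \<bar>\<eta> y\<bar> + ennreal \<bar>\<eta> x\<bar>"
      by (rule ennreal_plus) auto
    finally have *: "ennreal \<bar>\<eta> y - \<eta> x\<bar> \<le> ennreal \<bar>\<eta> y\<bar> + ennreal \<bar>\<eta> x\<bar>" .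
    then show "ennreal \<bar>\<eta> y - \<eta> x\<bar> * indicator (cball x R) y
      \<le> ennreal \<bar>\<eta> y\<bar> * indicator (cball x R) y + ennreal \<bar>\<eta> x\<bar> * indicator (cball x R) y"
      by (cases "y \<in> cball x R") simp_all
  qed
  also have "\<dots> = (\<integral>\<^sup>+ y \<in> cball x R. ennreal \<bar>\<eta> y\<bar> \<partial>\<mu>) + (\<integral>\<^sup>+ y. ennreal \<bar>\<eta> x\<bar> * indicator (cball x R) y \<partial>\<mu>)"
    by (rule nn_integral_add) measurable
  also have "\<dots> = (\<integral>\<^sup>+ y \<in> cball x R. ennreal \<bar>\<eta> y\<bar> \<partial>\<mu>) + ennreal \<bar>\<eta> x\<bar> * emeasure \<mu> (cball x R)"
    by (simp only: nn_integral_cmult_indicator[OF cb_sets])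
  also have "\<dots> < \<infinity>"
    using intR finR by (simp add: ennreal_mult_less_top less_top)
  finally show ?thesis .
qed

lemma densR: "emeasure (density \<mu> (\<lambda>y. ennreal \<bar>\<eta> y - \<eta> x\<bar>)) (cball x R) < \<infinity>"
  using devR dev_dens by simp

lemma fin_mu: "r \<le> R \<Longrightarrow> emeasure \<mu> (cball x r) < \<infinity>"
  using finR emeasure_mono[of "cball x r" "cball x R" \<mu>] subset_cball[of r R x]
  by (meson cb_sets le_less_trans)

lemma fin_dev: "r \<le> R \<Longrightarrow> dev_int \<mu> \<eta> x r < \<infinity>"
proof -
  assume r: "r \<le> R"
  have "emeasure (density \<mu> (\<lambda>y. ennreal \<bar>\<eta> y - \<eta> x\<bar>)) (cball x r)
     \<le> emeasure (density \<mu> (\<lambda>y. ennreal \<bar>\<eta> y - \<eta> x\<bar>)) (cball x R)"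
    using r by (intro emeasure_mono subset_cball) (auto simp: dens_sets)
  then show ?thesis using densR dev_dens by (metis le_less_trans)
qed

lemma D_eq: "Df \<mu> \<eta> x r = measure (density \<mu> (\<lambda>y. ennreal \<bar>\<eta> y - \<eta> x\<bar>)) (cball x r)"
  unfolding Df_def measure_def dev_dens ..

lemma V_pos: "0 < r \<Longrightarrow> r \<le> R \<Longrightarrow> Vf \<mu> x r > 0"
  unfolding Vf_def measure_def using pos fin_mu by (auto simp: enn2real_positive_iff)

lemma D_pos: "0 < r \<Longrightarrow> r \<le> R \<Longrightarrow> Df \<mu> \<eta> x r > 0"
  unfolding Df_def using dpos fin_dev by (auto simp: enn2real_positive_iff)

lemma V_mono: "s \<le> t \<Longrightarrow> t \<le> R \<Longrightarrow> Vf \<mu> x s \<le> Vf \<mu> x t"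
  unfolding Vf_def using fin_mu[of t]
  by (intro measure_mono_fmeasurable subset_cball) (auto intro!: fmeasurableI)

lemma D_mono: "s \<le> t \<Longrightarrow> t \<le> R \<Longrightarrow> Df \<mu> \<eta> x s \<le> Df \<mu> \<eta> x t"
  unfolding D_eq using fin_dev[of t] dev_dens dens_sets
  by (intro measure_mono_fmeasurable subset_cball) (auto intro!: fmeasurableI)

lemma V0: "Vf \<mu> x 0 = 0"
  unfolding Vf_def measure_def using sing by simp

lemma D0: "Df \<mu> \<eta> x 0 = 0"
proof -
  have "{x} \<in> sets \<mu>" using sets by simp
  with sing have "{x} \<in> null_sets \<mu>" by (rule null_setsI)
  then have "dev_int \<mu> \<eta> x 0 = 0" unfolding dev_int_def cball_trivial
    by (rule nn_integral_null_set)
  then show ?thesis unfolding Df_def by simp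
qed

lemma alphaM_eq: "r \<le> R \<Longrightarrow> alphaM \<mu> \<eta> x \<alpha> r = ennreal (Mf \<mu> \<eta> x \<alpha> r)"
  proof -
  assume r: "r \<le> R"
  have "dev_int \<mu> \<eta> x r \<noteq> \<infinity>" "emeasure \<mu> (cball x r) \<noteq> \<infinity>"
    using fin_mu[OF r] fin_dev[OF r] by auto
  then show ?thesis unfolding alphaM_def Mf_def Df_def Vf_def by simp
qed

lemma alphaM_mono:
  assumes a: "0 \<le> \<alpha>" "\<alpha> \<le> 1" and st: "s \<le> t"
  shows "alphaM \<mu> \<eta> x \<alpha> s \<le> alphaM \<mu> \<eta> x \<alpha> t"
proof -
  have dm: "dev_int \<mu> \<eta> x s \<le> dev_int \<mu> \<eta> x t"
    unfolding dev_dens using st by (intro emeasure_mono subset_cball) (auto simp: dens_sets)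
  have vm: "emeasure \<mu> (cball x s) \<le> emeasure \<mu> (cball x t)"
    using st by (intro emeasure_mono subset_cball) auto
  show ?thesis
  proof (cases "dev_int \<mu> \<eta> x t = \<infinity> \<or> emeasure \<mu> (cball x t) = \<infinity>")
    case True
    then show ?thesis unfolding alphaM_def[of _ _ _ _ t] by simp
  next
    case False
    then have ft: "dev_int \<mu> \<eta> x t \<noteq> \<infinity>" "emeasure \<mu> (cball x t) \<noteq> \<infinity>" by auto
    then have fs: "dev_int \<mu> \<eta> x s \<noteq> \<infinity>" "emeasure \<mu> (cball x s) \<noteq> \<infinity>"
      using dm vm by (auto simp: top_unique)
    have "enn2real (dev_int \<mu> \<eta> x s) \<le> enn2real (dev_int \<mu> \<eta> x t)"
      using dm ft by (intro enn2real_mono) (auto simp: less_top)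
    moreover have "measure \<mu> (cball x s) \<le> measure \<mu> (cball x t)"
      unfolding measure_def using vm ft by (intro enn2real_mono) (auto simp: less_top)
    ultimately have "enn2real (dev_int \<mu> \<eta> x s) powr \<alpha> * measure \<mu> (cball x s) powr (1 - \<alpha>)
        \<le> enn2real (dev_int \<mu> \<eta> x t) powr \<alpha> * measure \<mu> (cball x t) powr (1 - \<alpha>)"
      using a by (intro mult_mono powr_mono2) auto
    then show ?thesis unfolding alphaM_def using ft fs by (simp add: ennreal_leI)
  qed
qed

lemma M_lim:
  assumes a: "0 < \<alpha>" "\<alpha> < 1" and c: "0 \<le> c" "c < R"
  shows "(\<lambda>k. Mf \<mu> \<eta> x \<alpha> (c + (R - c) / real (Suc k))) \<longlonglongrightarrow> Mf \<mu> \<eta> x \<alpha> c"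
proof -
  have v: "(\<lambda>k. Vf \<mu> x (c + (R - c) / real (Suc k))) \<longlonglongrightarrow> Vf \<mu> x c"
    unfolding Vf_def by (rule ball_rcont[OF sets finR c])
  have d: "(\<lambda>k. Df \<mu> \<eta> x (c + (R - c) / real (Suc k))) \<longlonglongrightarrow> Df \<mu> \<eta> x c"
    unfolding D_eq by (rule ball_rcont[OF dens_sets densR c])
  show ?thesis unfolding Mf_def
    using a by (intro tendsto_mult tendsto_powr'[OF d] tendsto_powr'[OF v])
      (auto simp: Vf_def Df_def)
qed

lemma M_pos: "0 < \<alpha> \<Longrightarrow> \<alpha> < 1 \<Longrightarrow> 0 < r \<Longrightarrow> r \<le> R \<Longrightarrow> Mf \<mu> \<eta> x \<alpha> r > 0"
  unfolding Mf_def using V_pos[of r] D_pos[of r] by simp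

lemma M0: "0 < \<alpha> \<Longrightarrow> Mf \<mu> \<eta> x \<alpha> 0 = 0"
  unfolding Mf_def using D0 by simp

lemma M_nonneg: "Mf \<mu> \<eta> x \<alpha> r \<ge> 0"
  unfolding Mf_def by simp

lemma Sset_nonempty:
  assumes a: "0 < \<alpha>" "\<alpha> < 1" and m: "1 \<le> m"
  shows "Sset \<mu> \<eta> x \<alpha> m \<noteq> {}"
proof -
  have "(\<lambda>k. Mf \<mu> \<eta> x \<alpha> (0 + (R - 0) / real (Suc k))) \<longlonglongrightarrow> Mf \<mu> \<eta> x \<alpha> 0"
    using R by (intro M_lim a) auto
  then have "(\<lambda>k. Mf \<mu> \<eta> x \<alpha> (R / real (Suc k))) \<longlonglongrightarrow> 0" using M0 a by simp
  moreover have "0 < 1 / real m" using m by simp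
  ultimately have "eventually (\<lambda>k. Mf \<mu> \<eta> x \<alpha> (R / real (Suc k)) < 1 / real m) sequentially"
    by (rule order_tendstoD)
  then obtain k where k: "Mf \<mu> \<eta> x \<alpha> (R / real (Suc k)) < 1 / real m"
    by (auto simp: eventually_sequentially)
  have le: "R / real (Suc k) \<le> R" using R by (simp add: divide_le_eq)
  have "alphaM \<mu> \<eta> x \<alpha> (R / real (Suc k)) < ennreal (1 / real m)"
    unfolding alphaM_eq[OF le] using k m by (intro ennreal_lessI) auto
  then have "R / real (Suc k) \<in> Sset \<mu> \<eta> x \<alpha> m" unfolding Sset_def using R by auto
  then show ?thesis by auto
qed

context
  fixes \<alpha> :: real and rs :: "nat \<Rightarrow> real" and m1 :: nat and R1 :: real
  assumes a: "0 < \<alpha>" "\<alpha> < 1"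
    and R1: "0 < R1" "R1 < R"
    and aM: "alphaM \<mu> \<eta> x \<alpha> R1 < alphaM \<mu> \<eta> x \<alpha> R"
    and m1: "m1 = nat \<lceil>1 / enn2real (alphaM \<mu> \<eta> x \<alpha> R1)\<rceil>"
    and rs: "\<forall>m\<ge>m1. rs m = Sup (Sset \<mu> \<eta> x \<alpha> m)"
begin

lemma a1: assumes "m1 \<le> m" shows "1 \<le> m" "1 / real m \<le> Mf \<mu> \<eta> x \<alpha> R1"
proof -
  have MR1: "enn2real (alphaM \<mu> \<eta> x \<alpha> R1) = Mf \<mu> \<eta> x \<alpha> R1"
    using alphaM_eq[of R1] R1 M_nonneg by simp
  have p: "Mf \<mu> \<eta> x \<alpha> R1 > 0" using M_pos a R1 by simp
  have "1 / Mf \<mu> \<eta> x \<alpha> R1 \<le> real m1" unfolding m1 MR1 by (rule real_nat_ceiling_ge)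
  also have "\<dots> \<le> real m" using assms by simp
  finally have *: "1 / Mf \<mu> \<eta> x \<alpha> R1 \<le> real m" .
  moreover have "0 < 1 / Mf \<mu> \<eta> x \<alpha> R1" using p by simp
  ultimately have "0 < real m" by linarith
  then show "1 \<le> m" by simp
  show "1 / real m \<le> Mf \<mu> \<eta> x \<alpha> R1" using * p \<open>0 < real m\<close>
    by (simp add: field_simps)
qed

lemma a2: assumes "m1 \<le> m" "s \<in> Sset \<mu> \<eta> x \<alpha> m" shows "s < R1"
proof (rule ccontr)
  assume "\<not> s < R1"
  then have "alphaM \<mu> \<eta> x \<alpha> R1 \<le> alphaM \<mu> \<eta> x \<alpha> s" using a by (intro alphaM_mono) auto
  also have "\<dots> < ennreal (1 / real m)" using assms(2) unfolding Sset_def by auto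
  also have "\<dots> \<le> ennreal (Mf \<mu> \<eta> x \<alpha> R1)" using a1[OF assms(1)] by (intro ennreal_leI)
  also have "\<dots> = alphaM \<mu> \<eta> x \<alpha> R1" using alphaM_eq[of R1] R1 by simp
  finally show False by simp
qed

lemma a_bdd: "m1 \<le> m \<Longrightarrow> bdd_above (Sset \<mu> \<eta> x \<alpha> m)"
  using a2 by (meson bdd_above.I less_imp_le)

lemma a4: assumes "m1 \<le> m" shows "0 < rs m" "rs m \<le> R1"
proof -
  have ne: "Sset \<mu> \<eta> x \<alpha> m \<noteq> {}" using Sset_nonempty a a1(1)[OF assms] by simp
  then obtain s where s: "s \<in> Sset \<mu> \<eta> x \<alpha> m" by auto
  have "s \<le> rs m" using rs assms cSup_upper[OF s a_bdd[OF assms]] by simp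
  moreover have "0 < s" using s unfolding Sset_def by auto
  ultimately show "0 < rs m" by simp
  show "rs m \<le> R1" using rs assms cSup_least[OF ne] a2[OF assms] less_imp_le by metis
qed

lemma a5: assumes "m1 \<le> m" "0 < s" "s < rs m" shows "Mf \<mu> \<eta> x \<alpha> s < 1 / real m"
proof -
  have ne: "Sset \<mu> \<eta> x \<alpha> m \<noteq> {}" using Sset_nonempty a a1(1)[OF assms(1)] by simp
  obtain t where t: "t \<in> Sset \<mu> \<eta> x \<alpha> m" "s < t"
    using less_cSup_iff[OF ne a_bdd[OF assms(1)]] assms rs by auto
  have tR: "t \<le> R" using a2[OF assms(1) t(1)] R1 by simp
  have "ennreal (Mf \<mu> \<eta> x \<alpha> s) = alphaM \<mu> \<eta> x \<alpha> s" using alphaM_eq[of s] t tR by simp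
  also have "\<dots> \<le> alphaM \<mu> \<eta> x \<alpha> t" using t a by (intro alphaM_mono) auto
  also have "\<dots> < ennreal (1 / real m)" using t unfolding Sset_def by auto
  finally have "ennreal (Mf \<mu> \<eta> x \<alpha> s) < ennreal (1 / real m)" .
  then show ?thesis using ennreal_less_iff[OF M_nonneg] by blast
qed

lemma a6: assumes "m1 \<le> m" shows "1 / real m \<le> Mf \<mu> \<eta> x \<alpha> (rs m)"
proof (rule ccontr)
  assume "\<not> 1 / real m \<le> Mf \<mu> \<eta> x \<alpha> (rs m)"
  then have lt: "Mf \<mu> \<eta> x \<alpha> (rs m) < 1 / real m" by simp
  have r0: "0 < rs m" "rs m < R" using a4[OF assms] R1 by auto
  have "(\<lambda>k. Mf \<mu> \<eta> x \<alpha> (rs m + (R - rs m) / real (Suc k))) \<longlonglongrightarrow> Mf \<mu> \<eta> x \<alpha> (rs m)"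
    using r0 by (intro M_lim a) auto
  from order_tendstoD(2)[OF this lt] obtain k where
    k: "Mf \<mu> \<eta> x \<alpha> (rs m + (R - rs m) / real (Suc k)) < 1 / real m"
    by (auto simp: eventually_sequentially)
  define t where "t = rs m + (R - rs m) / real (Suc k)"
  have "(R - rs m) / real (Suc k) \<le> R - rs m" using r0 by (simp add: divide_le_eq)
  then have tR: "t \<le> R" unfolding t_def by simp
  have tgt: "rs m < t" unfolding t_def using r0 by simp
  have "alphaM \<mu> \<eta> x \<alpha> t < ennreal (1 / real m)"
    unfolding alphaM_eq[OF tR] using k a1(1)[OF assms] unfolding t_def by (intro ennreal_lessI) auto
  then have "t \<in> Sset \<mu> \<eta> x \<alpha> m" unfolding Sset_def using tgt r0 by auto
  then have "t \<le> rs m" using rs assms cSup_upper[OF _ a_bdd[OF assms]] by simp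
  then show False using tgt by simp
qed

lemma a7: "rs \<longlonglongrightarrow> 0"
proof (rule LIMSEQ_I)
  fix e :: real assume e: "0 < e"
  define d where "d = min (e / 2) R"
  have d: "0 < d" "d \<le> R" "d < e" unfolding d_def using e R by auto
  have Md: "Mf \<mu> \<eta> x \<alpha> d > 0" using M_pos a d by simp
  obtain N where N: "1 / Mf \<mu> \<eta> x \<alpha> d < real N" using reals_Archimedean2 by blast
  show "\<exists>no. \<forall>n\<ge>no. norm (rs n - 0) < e"
  proof (intro exI allI impI)
    fix n assume n: "max N m1 \<le> n"
    then have nm1: "m1 \<le> n" by simp
    have "0 < real N" using N Md by (meson le_less_trans less_eq_real_def zero_less_divide_1_iff)
    then have "1 / Mf \<mu> \<eta> x \<alpha> d < real n" using N n by simp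
    then have inv: "1 / real n < Mf \<mu> \<eta> x \<alpha> d" using Md \<open>0 < real N\<close> n
      by (simp add: field_simps)
    have "\<forall>s\<in>Sset \<mu> \<eta> x \<alpha> n. s \<le> d"
    proof
      fix s assume s: "s \<in> Sset \<mu> \<eta> x \<alpha> n"
      show "s \<le> d"
      proof (rule ccontr)
        assume "\<not> s \<le> d"
        then have "alphaM \<mu> \<eta> x \<alpha> d \<le> alphaM \<mu> \<eta> x \<alpha> s" using a by (intro alphaM_mono) auto
        also have "\<dots> < ennreal (1 / real n)" using s unfolding Sset_def by auto
        also have "\<dots> \<le> ennreal (Mf \<mu> \<eta> x \<alpha> d)" using inv by (intro ennreal_leI) simp
        also have "\<dots> = alphaM \<mu> \<eta> x \<alpha> d" using alphaM_eq[of d] d by simp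
        finally show False by simp
      qed
    qed
    then have "rs n \<le> d"
      using rs nm1 cSup_least[of "Sset \<mu> \<eta> x \<alpha> n" d] Sset_nonempty a a1(1)[OF nm1] by simp
    then show "norm (rs n - 0) < e" using a4(1)[OF nm1] d by simp
  qed
qed

end


lemma forward:
  assumes lp: "lebesgue_point \<mu> \<eta> x"
  shows "\<exists>\<alpha>. 0 < \<alpha> \<and> \<alpha> < 1 \<and>
       (\<exists>r m1. alpha_sequence \<mu> \<eta> x R \<alpha> r m1 \<and> lebesgue_point_along \<mu> \<eta> x r m1)"
proof -
  define \<alpha> :: real where "\<alpha> = 1 / 2"
  have a: "0 < \<alpha>" "\<alpha> < 1" unfolding \<alpha>_def by auto
  have "(\<lambda>k. Mf \<mu> \<eta> x \<alpha> (0 + (R - 0) / real (Suc k))) \<longlonglongrightarrow> Mf \<mu> \<eta> x \<alpha> 0"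
    using R by (intro M_lim a) auto
  then have "(\<lambda>k. Mf \<mu> \<eta> x \<alpha> (R / real (Suc k))) \<longlonglongrightarrow> 0" using M0 a by simp
  from order_tendstoD(2)[OF this M_pos[OF a R order_refl]]
  obtain N where N: "\<And>k. N \<le> k \<Longrightarrow> Mf \<mu> \<eta> x \<alpha> (R / real (Suc k)) < Mf \<mu> \<eta> x \<alpha> R"
    by (auto simp: eventually_sequentially)
  define R1 where "R1 = R / real (Suc (Suc N))"
  have R1: "0 < R1" "R1 < R" unfolding R1_def using R by (auto simp: divide_less_eq)
  have "alphaM \<mu> \<eta> x \<alpha> R1 < alphaM \<mu> \<eta> x \<alpha> R"
    unfolding alphaM_eq[OF less_imp_le[OF R1(2)]] alphaM_eq[OF order_refl]
    using N[of "Suc N"] M_pos[OF a R order_refl] unfolding R1_def by (intro ennreal_lessI) auto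
  note aM = this
  define m1 where "m1 = nat \<lceil>1 / enn2real (alphaM \<mu> \<eta> x \<alpha> R1)\<rceil>"
  define rs where "rs m = Sup (Sset \<mu> \<eta> x \<alpha> m)" for m
  have rsd: "\<forall>m\<ge>m1. rs m = Sup (Sset \<mu> \<eta> x \<alpha> m)" unfolding rs_def by simp
  note ctx = a R1 aM m1_def rsd
  have as: "alpha_sequence \<mu> \<eta> x R \<alpha> rs m1"
    unfolding alpha_sequence_def Sset_def[symmetric] using R1 aM m1_def rsd by blast
  have pos: "\<forall>m\<ge>m1. rs m > 0" using a4(1)[OF ctx] by blast
  have lim: "rs \<longlonglongrightarrow> 0" by (rule a7[OF ctx])
  have "filterlim rs (at_right 0) sequentially"
    using lim pos by (intro tendsto_imp_filterlim_at_right) (auto simp: eventually_sequentially)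
  then have "(\<lambda>m. ball_avg \<mu> \<eta> x (rs m)) \<longlonglongrightarrow> 0"
    using lp unfolding lebesgue_point_def by (rule filterlim_compose[rotated])
  then have "lebesgue_point_along \<mu> \<eta> x rs m1"
    unfolding lebesgue_point_along_def using pos lim by blast
  then show ?thesis using a as by blast
qed

lemma backward:
  assumes a: "0 < \<alpha>" "\<alpha> < 1" and as: "alpha_sequence \<mu> \<eta> x R \<alpha> rs m1"
    and lpa: "lebesgue_point_along \<mu> \<eta> x rs m1"
  shows "lebesgue_point \<mu> \<eta> x"
proof -
  obtain R1 where R1: "0 < R1" "R1 < R" and aM: "alphaM \<mu> \<eta> x \<alpha> R1 < alphaM \<mu> \<eta> x \<alpha> R"
    and m1: "m1 = nat \<lceil>1 / enn2real (alphaM \<mu> \<eta> x \<alpha> R1)\<rceil>"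
    and rsd: "\<forall>m\<ge>m1. rs m = Sup (Sset \<mu> \<eta> x \<alpha> m)"
    using as unfolding alpha_sequence_def Sset_def by blast
  note ctx = a R1 aM m1 rsd
  have blim: "(\<lambda>m. ball_avg \<mu> \<eta> x (rs m)) \<longlonglongrightarrow> 0"
    using lpa unfolding lebesgue_point_along_def by blast
  have rlim: "rs \<longlonglongrightarrow> 0" by (rule a7[OF ctx])
  have avg: "ball_avg \<mu> \<eta> x r = Df \<mu> \<eta> x r / Vf \<mu> x r" for r
    unfolding ball_avg_def Df_def Vf_def ..
  show ?thesis unfolding lebesgue_point_def tendsto_iff eventually_at_right_field
  proof (intro allI impI)
    fix e :: real assume e: "0 < e"
    define c :: real where "c = 2 powr (1 / \<alpha>)"
    have c: "0 < c" unfolding c_def by simp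
    from order_tendstoD(2)[OF blim, of "e / c"] e c
    obtain N0 where N0: "\<And>n. N0 \<le> n \<Longrightarrow> ball_avg \<mu> \<eta> x (rs n) < e / c"
      by (auto simp: eventually_sequentially)
    define N where "N = max N0 m1"
    define \<delta> where "\<delta> = Min (rs ` {m1..N})"
    have fin: "finite (rs ` {m1..N})" "rs ` {m1..N} \<noteq> {}" unfolding N_def by auto
    have \<delta>: "0 < \<delta>" unfolding \<delta>_def using fin a4(1)[OF ctx] by (auto simp: Min_gr_iff)
    show "\<exists>b>0. \<forall>y>0. y < b \<longrightarrow> dist (ball_avg \<mu> \<eta> x y) 0 < e"
    proof (intro exI conjI allI impI)
      show "0 < \<delta>" by (rule \<delta>)
      fix s :: real assume s: "0 < s" "s < \<delta>"
      from order_tendstoD(2)[OF rlim s(1)] obtain K where K: "\<And>n. K \<le> n \<Longrightarrow> rs n < s"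
        by (auto simp: eventually_sequentially)
      have ex: "m1 \<le> max K m1 \<and> rs (max K m1) \<le> s" using K[of "max K m1"] by simp
      define n where "n = (LEAST n. m1 \<le> n \<and> rs n \<le> s)"
      have n: "m1 \<le> n" "rs n \<le> s" using LeastI_ex[of "\<lambda>n. m1 \<le> n \<and> rs n \<le> s"] ex
        unfolding n_def by blast+
      have nmin: "s < rs k" if k: "k < n" "m1 \<le> k" for k
      proof -
        have "\<not> (m1 \<le> k \<and> rs k \<le> s)"
          using k(1) unfolding n_def by (rule not_less_Least)
        then show ?thesis using k(2) by simp
      qed
      have "N < n"
      proof (rule ccontr)
        assume "\<not> N < n"
        then have "rs n \<in> rs ` {m1..N}" using n by auto
        then have "\<delta> \<le> rs n" unfolding \<delta>_def using fin by simp
        then show False using n s by simp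
      qed
      define m where "m = n - 1"
      have m: "m1 \<le> m" "N0 \<le> m" "n = Suc m" using \<open>N < n\<close> unfolding m_def N_def by auto
      have srm: "s < rs m" using nmin[of m] m by simp
      have m1': "1 \<le> m" using a1(1)[OF ctx m(1)] .
      have rmR: "rs m \<le> R1" using a4(2)[OF ctx m(1)] .
      have sR: "s \<le> R" using srm rmR R1 by simp
      have rnp: "0 < rs n" "rs n \<le> R" using a4[OF ctx n(1)] R1 by auto
      have Ms: "Mf \<mu> \<eta> x \<alpha> s < 1 / real m" using a5[OF ctx m(1) s(1) srm] .
      have Mn: "1 / real n \<le> Mf \<mu> \<eta> x \<alpha> (rs n)" using a6[OF ctx n(1)] .
      have "1 / real m \<le> 2 / real n" using m1' m(3) by (simp add: field_simps)
      then have "Mf \<mu> \<eta> x \<alpha> s \<le> 2 * Mf \<mu> \<eta> x \<alpha> (rs n)" using Ms Mn by simp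
      then have "Df \<mu> \<eta> x s / Vf \<mu> x s \<le> 2 powr (1 / \<alpha>) * (Df \<mu> \<eta> x (rs n) / Vf \<mu> x (rs n))"
        unfolding Mf_def
        using key[OF a(1) D_pos[OF s(1) sR] V_pos[OF s(1) sR] D_pos[OF rnp] V_pos[OF rnp]
          V_mono[OF n(2) sR]] by simp
      also have "\<dots> < c * (e / c)" unfolding c_def[symmetric] using N0[of n] m c
        unfolding avg by (intro mult_strict_left_mono) auto
      also have "\<dots> = e" using c by simp
      finally have "Df \<mu> \<eta> x s / Vf \<mu> x s < e" .
      moreover have "0 \<le> Df \<mu> \<eta> x s / Vf \<mu> x s" using D_pos[OF s(1) sR] V_pos[OF s(1) sR] by simp
      ultimately show "dist (ball_avg \<mu> \<eta> x s) 0 < e" unfolding avg by simp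
    qed
  qed
qed

end


theorem mainTheorem14:
  fixes \<mu> :: "'a::metric_space measure" and \<eta> :: "'a \<Rightarrow> real" and x :: 'a and R :: real
  assumes "sets \<mu> = sets borel"
    and "\<eta> \<in> borel_measurable \<mu>"
    and "\<forall>r>0. emeasure \<mu> (cball x r) > 0"
    and "R > 0"
    and "emeasure \<mu> (cball x R) < \<infinity>"
    and "(\<integral>\<^sup>+ y \<in> cball x R. ennreal \<bar>\<eta> y\<bar> \<partial>\<mu>) < \<infinity>"
    and "emeasure \<mu> {x} = 0"
    and "\<forall>r>0. dev_int \<mu> \<eta> x r > 0"
  shows "lebesgue_point \<mu> \<eta> x \<longleftrightarrow>
    (\<exists>\<alpha>. 0 < \<alpha> \<and> \<alpha> < 1 \<and>
       (\<exists>r m1. alpha_sequence \<mu> \<eta> x R \<alpha> r m1 \<and> lebesgue_point_along \<mu> \<eta> x r m1))"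
  using forward[OF assms] backward[OF assms] by blast

end
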